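(* Let $r>2$, fix $1\le i_-\le r-1$ and put $i_+=i_-+1$. Let $\phi^e_v:H^e_r\to H^e_{r+1}$ be the embedding $T_i\mapsto \check T_i$ ($1\le i<i_-$), $T_{i_-}\mapsto\check T_{i_-}\check T_{i_+}\check T_{i_-}^{-1}$, $T_i\mapsto\check T_{i+1}$ ($i_+\le i\le r$), $T_\rho\mapsto\check T_{i_+}^{-1}\check T_\rho$, and let $\phi^{BL}_v=\varphi_{r+1}\circ\phi^e_v\circ\varphi_r^{-1}:H^{BL}_r\to H^{BL}_{r+1}$. Writing $\check T_i,\check X_j$ for the generators of $H^{BL}_{r+1}$, we have \[ \phi^{BL}_v(T_i)=\begin{cases}\check T_i & 1\le i<i_-,\\ \check T_{i_-}\check T_{i_+}\check T_{i_-}^{-1} & i=i_-,\\ \check T_{i+1} & i_+\le i\le r-1,\end{cases} \] \[ \phi^{BL}_v(X_j)=\begin{cases}\check X_j+(v-v^{-1})\,\check X_{i_+}\,\check T_j^{-1}\cdots\check T_{i_--1}^{-1}\check T_{i_-}^{-1}\check T_{i_--1}^{-1}\cdots\check T_j^{-1} & 1\le j\le i_-,\\ \check X_{j+1} & i_+\le j\le r,\end{cases} \] where for $j=i_-$ the product $\check T_j^{-1}\cdots\check T_{i_-}^{-1}\cdots\check T_j^{-1}$ means $\check T_{i_-}^{-1}$.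
   Context: $\mathcal A=\mathbb Z[v,v^{-1}]$. For $r>2$, $H^e_r$ is the $\mathcal A$-algebra with generators $T_i$ ($i\in\mathbb Z/r\mathbb Z$), $T_\rho^{\pm1}$ and relations $(T_i-v)(T_i+v^{-1})=0$, $T_iT_{i+1}T_i=T_{i+1}T_iT_{i+1}$, $T_iT_j=T_jT_i$ for $i-j\not\equiv\pm1\pmod r$, $T_\rho T_i=T_{i+1}T_\rho$, $T_\rho T_\rho^{-1}=T_\rho^{-1}T_\rho=1$. $H^{BL}_r$ (Bernstein–Lusztig presentation) is the $\mathcal A$-algebra with generators $T_i$ ($1\le i\le r-1$) and $X_j^{\pm1}$ ($1\le j\le r$) and relations: $(T_i-v)(T_i+v^{-1})=0$; $T_iT_{i+1}T_i=T_{i+1}T_iT_{i+1}$ ($1\le i\le r-2$); $T_iT_j=T_jT_i$ ($|i-j|\ge2$); $X_jX_j^{-1}=X_j^{-1}X_j=1$ and $X_jX_k=X_kX_j$ for all $j,k$; $T_iX_iT_i=X_{i+1}$ ($1\le i\le r-1$); $T_iX_j=X_jT_i$ for $j\ne i,i+1$. It is known that the assignment $T_i\mapsto T_i$ ($1\le i\le r-1$), $T_\rho\mapsto(T_{r-1}T_{r-2}\cdots T_1X_1)^{-1}$ extends to an $\mathcal A$-algebra isomorphism $\varphi_r:H^e_r\to H^{BL}_r$ (and similarly $\varphi_{r+1}$). *)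

theory Defs
  imports Main "HOL-Library.Poly_Mapping"
begin

text \<open>Laurent polynomials with integer coefficients: finitely supported
  functions int => int with convolution product (exponent monoid = int).\<close>
type_synonym laurent = "int \<Rightarrow>\<^sub>0 int"

definition lv :: laurent where "lv = Poly_Mapping.single 1 1"
definition lvinv :: laurent where "lvinv = Poly_Mapping.single (-1) 1"

datatype 'g fword = FW "'g list"

primrec unFW :: "'g fword \<Rightarrow> 'g list" where "unFW (FW xs) = xs"

instantiation fword :: (type) monoid_add
begin
definition zero_fword :: "'a fword" where "zero_fword = FW []"
definition plus_fword :: "'a fword \<Rightarrow> 'a fword \<Rightarrow> 'a fword"
  where "plus_fword a b = FW (unFW a @ unFW b)"
instance
proof
  fix a b c :: "'a fword"
  show "a + b + c = a + (b + c)" by (cases a; cases b; cases c) (simp add: plus_fword_def)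
  show "0 + a = a" by (cases a) (simp add: plus_fword_def zero_fword_def)
  show "a + 0 = a" by (cases a) (simp add: plus_fword_def zero_fword_def)
qed
end

text \<open>Each presented algebra kills the
  generators that do not belong to it, so the quotient is exactly that algebra.\<close>
datatype gen = GT nat | GRho | GRhoInv | GX nat | GXinv nat

text \<open>Free associative A-algebra on gen: A-linear combinations of words,
  multiplication = concatenation (convolution over the word monoid).\<close>
type_synonym falg = "gen fword \<Rightarrow>\<^sub>0 laurent"

definition sc :: "laurent \<Rightarrow> falg" where "sc c = Poly_Mapping.single 0 c"
definition g :: "gen \<Rightarrow> falg" where "g x = Poly_Mapping.single (FW [x]) 1"

definition vv :: falg where "vv = sc lv"
definition vvi :: falg where "vvi = sc lvinv"

text \<open>Inverse of a generator T satisfying (T - v)(T + v^-1) = 0: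
  T^-1 = T - (v - v^-1).\<close>
definition tinv :: "falg \<Rightarrow> falg" where "tinv t = t - (vv - vvi)"

definition fsubst :: "(gen \<Rightarrow> falg) \<Rightarrow> falg \<Rightarrow> falg" where
  "fsubst f p = (\<Sum>w\<in>Poly_Mapping.keys p. sc (Poly_Mapping.lookup p w) * prod_list (map f (unFW w)))"

inductive_set tsideal :: "falg set \<Rightarrow> falg set" for R :: "falg set" where
  base: "x \<in> R \<Longrightarrow> x \<in> tsideal R"
| zero: "0 \<in> tsideal R"
| add: "x \<in> tsideal R \<Longrightarrow> y \<in> tsideal R \<Longrightarrow> x + y \<in> tsideal R"
| mult: "x \<in> tsideal R \<Longrightarrow> a * x * b \<in> tsideal R"

text \<open>Index i of T_i taken in Z/rZ, represented by GT (i mod r); GT 0 is T_0 = T_r.\<close>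
definition eT :: "nat \<Rightarrow> nat \<Rightarrow> falg" where "eT r i = g (GT (i mod r))"

definition rel_e :: "nat \<Rightarrow> falg set" where
  "rel_e r =
     {(eT r i - vv) * (eT r i + vvi) | i. i < r}
   \<union> {eT r i * eT r (i+1) * eT r i - eT r (i+1) * eT r i * eT r (i+1) | i. i < r}
   \<union> {eT r i * eT r j - eT r j * eT r i | i j. i < r \<and> j < r
        \<and> j \<noteq> (i + 1) mod r \<and> i \<noteq> (j + 1) mod r}
   \<union> {g GRho * eT r i - eT r (i+1) * g GRho | i. i < r}
   \<union> {g GRho * g GRhoInv - 1, g GRhoInv * g GRho - 1}
   \<union> {g (GT k) | k. r \<le> k} \<union> {g (GX k) | k. True} \<union> {g (GXinv k) | k. True}"

definition eq_e :: "nat \<Rightarrow> falg \<Rightarrow> falg \<Rightarrow> bool" where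
  "eq_e r x y \<longleftrightarrow> x - y \<in> tsideal (rel_e r)"

definition bT :: "nat \<Rightarrow> falg" where "bT i = g (GT i)"
definition bX :: "nat \<Rightarrow> falg" where "bX j = g (GX j)"
definition bXi :: "nat \<Rightarrow> falg" where "bXi j = g (GXinv j)"

definition rel_BL :: "nat \<Rightarrow> falg set" where
  "rel_BL r =
     {(bT i - vv) * (bT i + vvi) | i. 1 \<le> i \<and> i \<le> r - 1}
   \<union> {bT i * bT (i+1) * bT i - bT (i+1) * bT i * bT (i+1) | i. 1 \<le> i \<and> i \<le> r - 2}
   \<union> {bT i * bT j - bT j * bT i | i j. 1 \<le> i \<and> i \<le> r - 1 \<and> 1 \<le> j \<and> j \<le> r - 1
        \<and> (i + 2 \<le> j \<or> j + 2 \<le> i)}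
   \<union> {bX j * bXi j - 1 | j. 1 \<le> j \<and> j \<le> r} \<union> {bXi j * bX j - 1 | j. 1 \<le> j \<and> j \<le> r}
   \<union> {bX j * bX k - bX k * bX j | j k. 1 \<le> j \<and> j \<le> r \<and> 1 \<le> k \<and> k \<le> r}
   \<union> {bT i * bX i * bT i - bX (i+1) | i. 1 \<le> i \<and> i \<le> r - 1}
   \<union> {bT i * bX j - bX j * bT i | i j. 1 \<le> i \<and> i \<le> r - 1 \<and> 1 \<le> j \<and> j \<le> r
        \<and> j \<noteq> i \<and> j \<noteq> i + 1}
   \<union> {g GRho, g GRhoInv, g (GT 0)} \<union> {g (GT k) | k. r \<le> k}
   \<union> {g (GX 0), g (GXinv 0)} \<union> {g (GX k) | k. r < k} \<union> {g (GXinv k) | k. r < k}"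

definition eq_BL :: "nat \<Rightarrow> falg \<Rightarrow> falg \<Rightarrow> bool" where
  "eq_BL r x y \<longleftrightarrow> x - y \<in> tsideal (rel_BL r)"

text \<open>phi_r : H^e_r -> H^BL_r, T_i |-> T_i (1 <= i <= r-1),
  T_rho |-> (T_{r-1} ... T_1 X_1)^-1 = X_1^-1 T_1^-1 ... T_{r-1}^-1,
  hence T_rho^-1 |-> T_{r-1} ... T_1 X_1 and T_0 = T_rho T_{r-1} T_rho^-1 |-> accordingly.\<close>
definition phiRho :: "nat \<Rightarrow> falg" where
  "phiRho r = bXi 1 * prod_list (map (\<lambda>i. tinv (bT i)) [1..<r])"
definition phiRhoInv :: "nat \<Rightarrow> falg" where
  "phiRhoInv r = prod_list (map bT (rev [1..<r])) * bX 1"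

definition phi_gen :: "nat \<Rightarrow> gen \<Rightarrow> falg" where
  "phi_gen r x = (case x of
      GT i \<Rightarrow> (if 1 \<le> i \<and> i \<le> r - 1 then bT i
              else if i = 0 then phiRho r * bT (r - 1) * phiRhoInv r else 0)
    | GRho \<Rightarrow> phiRho r
    | GRhoInv \<Rightarrow> phiRhoInv r
    | GX _ \<Rightarrow> 0
    | GXinv _ \<Rightarrow> 0)"

definition phi :: "nat \<Rightarrow> falg \<Rightarrow> falg" where "phi r = fsubst (phi_gen r)"

text \<open>phi^e_v : H^e_r -> H^e_{r+1} (parameter im = i_-, i_+ = im + 1).
  T_i |-> T_i (1 <= i < i_-), T_{i_-} |-> T_{i_-} T_{i_+} T_{i_-}^-1,
  T_i |-> T_{i+1} (i_+ <= i <= r; T_r = T_0 |-> T_{r+1} = T_0),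
  T_rho |-> T_{i_+}^-1 T_rho (so T_rho^-1 |-> T_rho^-1 T_{i_+}).\<close>
definition phiE_gen :: "nat \<Rightarrow> nat \<Rightarrow> gen \<Rightarrow> falg" where
  "phiE_gen r im x = (let k = (\<lambda>i. if i = 0 then r else i) in case x of
      GT i \<Rightarrow> (if i < r then
                 (if 1 \<le> k i \<and> k i < im then eT (r+1) (k i)
                  else if k i = im then eT (r+1) im * eT (r+1) (im+1) * tinv (eT (r+1) im)
                  else eT (r+1) (k i + 1))
               else 0)
    | GRho \<Rightarrow> tinv (eT (r+1) (im+1)) * g GRho
    | GRhoInv \<Rightarrow> g GRhoInv * eT (r+1) (im+1)
    | GX _ \<Rightarrow> 0
    | GXinv _ \<Rightarrow> 0)"

definition phiE :: "nat \<Rightarrow> nat \<Rightarrow> falg \<Rightarrow> falg" where "phiE r im = fsubst (phiE_gen r im)"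

definition induces_embedding :: "(falg \<Rightarrow> falg \<Rightarrow> bool) \<Rightarrow> (falg \<Rightarrow> falg \<Rightarrow> bool) \<Rightarrow> (falg \<Rightarrow> falg) \<Rightarrow> bool" where
  "induces_embedding eq1 eq2 f \<longleftrightarrow> (\<forall>x y. eq1 x y \<longleftrightarrow> eq2 (f x) (f y))"

definition induces_iso :: "(falg \<Rightarrow> falg \<Rightarrow> bool) \<Rightarrow> (falg \<Rightarrow> falg \<Rightarrow> bool) \<Rightarrow> (falg \<Rightarrow> falg) \<Rightarrow> bool" where
  "induces_iso eq1 eq2 f \<longleftrightarrow> induces_embedding eq1 eq2 f \<and> (\<forall>z. \<exists>x. eq2 (f x) z)"

text \<open>Value of phi^BL_v = phi_{r+1} o phi^e_v o phi_r^-1 : H^BL_r -> H^BL_{r+1}: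
  phiBL_is r im a b means phi^BL_v([a]) = [b]: every preimage y of [a] under phi_r
  is sent by phi_{r+1} o phi^e_v to [b].\<close>
definition phiBL_is :: "nat \<Rightarrow> nat \<Rightarrow> falg \<Rightarrow> falg \<Rightarrow> bool" where
  "phiBL_is r im a b \<longleftrightarrow>
     (\<forall>y. eq_BL r (phi r y) a \<longrightarrow> eq_BL (r+1) (phi (r+1) (phiE r im y)) b)"

end

theory Submission
  imports Defs
begin
lemma sc_add: "sc (a + b) = sc a + sc b" by (simp add: sc_def Poly_Mapping.single_add)
lemma sc_0[simp]: "sc 0 = 0" by (simp add: sc_def)
lemma sc_mult: "sc (a * b) = sc a * sc b" by (simp add: sc_def Poly_Mapping.mult_single)
lemma sc_1[simp]: "sc 1 = 1" by (simp add: sc_def)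
lemma single_comm: "Poly_Mapping.single w a * (sc c :: falg) = sc c * Poly_Mapping.single w a"
  by (simp add: sc_def Poly_Mapping.mult_single mult.commute)
lemma expand: "(p::'a \<Rightarrow>\<^sub>0 'b::comm_monoid_add) = (\<Sum>w\<in>Poly_Mapping.keys p. Poly_Mapping.single w (Poly_Mapping.lookup p w))"
  apply (rule poly_mapping_eqI)
  apply (simp add: Poly_Mapping.lookup_sum Poly_Mapping.lookup_single when_def)
  by (metis (mono_tags, lifting) in_keys_iff)

lemma sc_central: "sc c * (x::falg) = x * sc c"
proof -
  have "sc c * x = sc c * (\<Sum>w\<in>Poly_Mapping.keys x. Poly_Mapping.single w (Poly_Mapping.lookup x w))"
    by (subst expand, rule refl)
  also have "\<dots> = (\<Sum>w\<in>Poly_Mapping.keys x. Poly_Mapping.single w (Poly_Mapping.lookup x w)) * sc c"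
    by (simp add: sum_distrib_left sum_distrib_right single_comm)
  finally show ?thesis by (subst (2) expand) 
qed

definition FF :: "(gen \<Rightarrow> falg) \<Rightarrow> gen fword \<Rightarrow> laurent \<Rightarrow> falg" where
  "FF f w c = sc c * prod_list (map f (unFW w))"

lemma fsubst_sup: "finite S \<Longrightarrow> Poly_Mapping.keys p \<subseteq> S \<Longrightarrow>
   fsubst f p = (\<Sum>w\<in>S. FF f w (Poly_Mapping.lookup p w))"
  unfolding fsubst_def FF_def
  by (rule sum.mono_neutral_left) (auto simp: in_keys_iff)

lemma fsubst_add: "fsubst f (p + q) = fsubst f p + fsubst f q"
proof -
  let ?S = "Poly_Mapping.keys p \<union> Poly_Mapping.keys q"
  have k: "Poly_Mapping.keys (p+q) \<subseteq> ?S" by (rule Poly_Mapping.keys_add)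
  show ?thesis
    apply (subst fsubst_sup[OF _ k], simp)
    apply (subst fsubst_sup[of ?S p], simp, simp)
    apply (subst fsubst_sup[of ?S q], simp, simp)
    by (simp add: FF_def Poly_Mapping.lookup_add sc_add distrib_right sum.distrib)
qed

lemma fsubst_0[simp]: "fsubst f 0 = 0" by (simp add: fsubst_def)

lemma fsubst_diff: "fsubst f (p - q) = fsubst f p - fsubst f q"
  by (metis add_diff_cancel diff_add_cancel fsubst_add eq_diff_eq)

lemma fsubst_sum: "finite A \<Longrightarrow> fsubst f (sum h A) = (\<Sum>a\<in>A. fsubst f (h a))"
  by (induction A rule: finite_induct) (simp_all add: fsubst_add)

lemma fsubst_single: "fsubst f (Poly_Mapping.single w c) = FF f w c"
  by (cases "c = 0") (simp_all add: fsubst_def FF_def)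

lemma FF_mult: "FF f (w + w') (c * c') = FF f w c * FF f w' c'"
proof -
  have "unFW (w + w') = unFW w @ unFW w'" by (simp add: plus_fword_def)
  then have "FF f (w + w') (c * c') = sc c * sc c' * (prod_list (map f (unFW w)) * prod_list (map f (unFW w')))"
    by (simp add: FF_def sc_mult)
  also have "\<dots> = sc c * (sc c' * prod_list (map f (unFW w))) * prod_list (map f (unFW w'))"
    by (simp add: mult.assoc)
  also have "\<dots> = sc c * (prod_list (map f (unFW w)) * sc c') * prod_list (map f (unFW w'))"
    by (simp only: sc_central)
  also have "\<dots> = FF f w c * FF f w' c'"
    by (simp add: FF_def mult.assoc)
  finally show ?thesis .
qed

lemma fsubst_mult: "fsubst f (p * q) = fsubst f p * fsubst f q"
proof -
  let ?P = "Poly_Mapping.keys p" and ?Q = "Poly_Mapping.keys q"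
  have "p * q = (\<Sum>w\<in>?P. Poly_Mapping.single w (Poly_Mapping.lookup p w)) * (\<Sum>w'\<in>?Q. Poly_Mapping.single w' (Poly_Mapping.lookup q w'))"
    by (subst expand, subst (2) expand, rule refl)
  also have "\<dots> = (\<Sum>w\<in>?P. \<Sum>w'\<in>?Q. Poly_Mapping.single (w + w') (Poly_Mapping.lookup p w * Poly_Mapping.lookup q w'))"
    by (simp add: sum_product Poly_Mapping.mult_single)
  finally have pq: "p * q = \<dots>" .
  have "fsubst f (p * q) = (\<Sum>w\<in>?P. \<Sum>w'\<in>?Q. FF f w (Poly_Mapping.lookup p w) * FF f w' (Poly_Mapping.lookup q w'))"
    by (simp add: pq fsubst_sum fsubst_single FF_mult)
  also have "\<dots> = fsubst f p * fsubst f q"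
    unfolding fsubst_def FF_def by (rule sum_product[symmetric])
  finally show ?thesis .
qed

lemma fsubst_g[simp]: "fsubst f (g x) = f x"
  by (simp add: g_def fsubst_single FF_def)
lemma fsubst_sc[simp]: "fsubst f (sc c) = sc c"
  by (simp add: sc_def fsubst_single FF_def zero_fword_def)
lemma fsubst_1[simp]: "fsubst f 1 = 1"
  using fsubst_sc[of f 1] by simp
lemma fsubst_prod_list: "fsubst f (prod_list xs) = prod_list (map (fsubst f) xs)"
  by (induction xs) (simp_all add: fsubst_mult)
lemma fsubst_tinv: "fsubst f (tinv x) = tinv (fsubst f x)"
  by (simp add: tinv_def fsubst_diff vv_def vvi_def)

section \<open>Congruence modulo a two-sided ideal\<close>

definition ceq :: "falg set \<Rightarrow> falg \<Rightarrow> falg \<Rightarrow> bool" where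
  "ceq R x y \<longleftrightarrow> x - y \<in> tsideal R"

lemma ts_left: "x \<in> tsideal R \<Longrightarrow> a * x \<in> tsideal R"
  using tsideal.mult[of x R a 1] by simp
lemma ts_right: "x \<in> tsideal R \<Longrightarrow> x * b \<in> tsideal R"
  using tsideal.mult[of x R 1 b] by simp
lemma ts_neg: "x \<in> tsideal R \<Longrightarrow> - x \<in> tsideal R"
  using ts_left[of x R "-1"] by simp

lemma ceq_refl[simp]: "ceq R x x" by (simp add: ceq_def tsideal.zero)
lemma ceq_sym: "ceq R x y \<Longrightarrow> ceq R y x"
  unfolding ceq_def using ts_neg by fastforce
lemma ceq_trans[trans]: "ceq R x y \<Longrightarrow> ceq R y z \<Longrightarrow> ceq R x z"
  unfolding ceq_def using tsideal.add by fastforce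
lemma ceq_eq_trans[trans]: "x = y \<Longrightarrow> ceq R y z \<Longrightarrow> ceq R x z" by simp
lemma ceq_trans_eq[trans]: "ceq R x y \<Longrightarrow> y = z \<Longrightarrow> ceq R x z" by simp
lemma ceq_add: "ceq R x x' \<Longrightarrow> ceq R y y' \<Longrightarrow> ceq R (x + y) (x' + y')"
proof -
  assume "ceq R x x'" "ceq R y y'"
  then have "(x - x') + (y - y') \<in> tsideal R" unfolding ceq_def by (rule tsideal.add)
  then show ?thesis unfolding ceq_def by (simp add: algebra_simps)
qed
lemma ceq_diff: "ceq R x x' \<Longrightarrow> ceq R y y' \<Longrightarrow> ceq R (x - y) (x' - y')"
proof -
  assume "ceq R x x'" "ceq R y y'"
  then have "x - x' \<in> tsideal R" "-(y - y') \<in> tsideal R" unfolding ceq_def using ts_neg by blast+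
  then have "(x - x') + -(y - y') \<in> tsideal R" by (rule tsideal.add)
  then show ?thesis unfolding ceq_def by (simp add: algebra_simps)
qed
lemma ceq_mult: "ceq R x x' \<Longrightarrow> ceq R y y' \<Longrightarrow> ceq R (x * y) (x' * y')"
proof -
  assume "ceq R x x'" "ceq R y y'"
  then have "(x - x') * y \<in> tsideal R" "x' * (y - y') \<in> tsideal R" unfolding ceq_def
    using ts_left ts_right by auto
  then have "(x - x') * y + x' * (y - y') \<in> tsideal R" by (rule tsideal.add)
  then show ?thesis unfolding ceq_def by (simp add: algebra_simps)
qed
lemma ceqL: "ceq R y y' \<Longrightarrow> ceq R (x * y) (x * y')" by (rule ceq_mult) simp_all
lemma ceqR: "ceq R x x' \<Longrightarrow> ceq R (x * y) (x' * y)" by (rule ceq_mult) simp_all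
lemma ceqLR: "ceq R y y' \<Longrightarrow> ceq R (x * y * z) (x * y' * z)" by (rule ceq_mult, rule ceq_mult) simp_all
lemma ceq_rel: "x - y \<in> R \<Longrightarrow> ceq R x y" by (simp add: ceq_def tsideal.base)
lemma ceq_rel0: "x \<in> R \<Longrightarrow> ceq R x 0" by (simp add: ceq_def tsideal.base)

section \<open>Relations in H^BL_n\<close>

abbreviation E :: "nat \<Rightarrow> falg \<Rightarrow> falg \<Rightarrow> bool" where "E n \<equiv> ceq (rel_BL n)"

lemma eq_BL_E: "eq_BL n x y = E n x y" by (simp add: eq_BL_def ceq_def)

definition cc :: falg where "cc = vv - vvi"

lemma vv_vvi: "vv * vvi = 1"
  by (simp add: vv_def vvi_def sc_mult[symmetric] lv_def lvinv_def Poly_Mapping.mult_single)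
lemma vvi_vv: "vvi * vv = 1"
  by (simp add: vv_def vvi_def sc_mult[symmetric] lv_def lvinv_def Poly_Mapping.mult_single)
lemma vv_c: "vv * x = x * vv" by (simp add: vv_def sc_central)
lemma vvi_c: "vvi * x = x * vvi" by (simp add: vvi_def sc_central)
lemma cc_c: "cc * x = x * cc" by (simp add: cc_def algebra_simps vv_c vvi_c)
lemma tinv_cc: "tinv t = t - cc" by (simp add: tinv_def cc_def)

lemma quad_id: "t * tinv t = (t - vv) * (t + vvi) + 1" "tinv t * t = (t - vv) * (t + vvi) + 1"
  by (simp_all add: tinv_def algebra_simps vv_vvi vv_c[of t] vvi_c[of t])

lemma BL_quad: "1 \<le> i \<Longrightarrow> i \<le> n - 1 \<Longrightarrow> E n ((bT i - vv) * (bT i + vvi)) 0"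
  by (rule ceq_rel0, unfold rel_BL_def, blast)

lemma TTi: "1 \<le> i \<Longrightarrow> i \<le> n - 1 \<Longrightarrow> E n (bT i * tinv (bT i)) 1"
  using ceq_add[OF BL_quad ceq_refl, of i n 1] by (simp add: quad_id)
lemma TiT: "1 \<le> i \<Longrightarrow> i \<le> n - 1 \<Longrightarrow> E n (tinv (bT i) * bT i) 1"
  using ceq_add[OF BL_quad ceq_refl, of i n 1] by (simp add: quad_id)
lemma TT: "1 \<le> i \<Longrightarrow> i \<le> n - 1 \<Longrightarrow> E n (bT i * bT i) (1 + cc * bT i)"
proof -
  assume a: "1 \<le> i" "i \<le> n - 1"
  have "bT i * bT i = bT i * tinv (bT i) + cc * bT i" by (simp add: tinv_cc algebra_simps cc_c)
  also have "E n \<dots> (1 + cc * bT i)" by (rule ceq_add[OF TTi[OF a] ceq_refl])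
  finally show ?thesis .
qed

lemma braid: "1 \<le> i \<Longrightarrow> i \<le> n - 2 \<Longrightarrow> E n (bT i * bT (i+1) * bT i) (bT (i+1) * bT i * bT (i+1))"
  by (rule ceq_rel, unfold rel_BL_def, blast)
lemma commT: "1 \<le> i \<Longrightarrow> i \<le> n - 1 \<Longrightarrow> 1 \<le> j \<Longrightarrow> j \<le> n - 1 \<Longrightarrow> i + 2 \<le> j \<or> j + 2 \<le> i
   \<Longrightarrow> E n (bT i * bT j) (bT j * bT i)"
  by (rule ceq_rel, unfold rel_BL_def, blast)
lemma TXT: "1 \<le> i \<Longrightarrow> i \<le> n - 1 \<Longrightarrow> E n (bT i * bX i * bT i) (bX (i+1))"
  by (rule ceq_rel, unfold rel_BL_def, blast)
lemma commTX: "1 \<le> i \<Longrightarrow> i \<le> n - 1 \<Longrightarrow> 1 \<le> j \<Longrightarrow> j \<le> n \<Longrightarrow> j \<noteq> i \<Longrightarrow> j \<noteq> i + 1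
   \<Longrightarrow> E n (bT i * bX j) (bX j * bT i)"
  by (rule ceq_rel, unfold rel_BL_def, blast)

lemma comm_tinv1: "E n (t * y) (y * t) \<Longrightarrow> E n (tinv t * y) (y * tinv t)"
proof -
  assume h: "E n (t * y) (y * t)"
  have "tinv t * y = t * y - cc * y" by (simp add: tinv_cc algebra_simps)
  also have "E n \<dots> (y * t - y * cc)" by (rule ceq_diff[OF h]) (simp add: cc_c)
  also have "\<dots> = y * tinv t" by (simp add: tinv_cc algebra_simps)
  finally show ?thesis .
qed
lemma comm_tinv2: "E n (t * y) (y * t) \<Longrightarrow> E n (t * tinv y) (tinv y * t)"
proof -
  assume h: "E n (t * y) (y * t)"
  have "t * tinv y = t * y - t * cc" by (simp add: tinv_cc algebra_simps)
  also have "E n \<dots> (y * t - cc * t)" by (rule ceq_diff[OF h]) (simp add: cc_c)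
  also have "\<dots> = tinv y * t" by (simp add: tinv_cc algebra_simps)
  finally show ?thesis .
qed
lemma comm_prod: "(\<And>z. z \<in> set zs \<Longrightarrow> E n (x * z) (z * x)) \<Longrightarrow> E n (x * prod_list zs) (prod_list zs * x)"
proof (induction zs)
  case Nil then show ?case by simp
next
  case (Cons z zs)
  have "x * prod_list (z # zs) = (x * z) * prod_list zs" by (simp add: mult.assoc)
  also have "E n \<dots> ((z * x) * prod_list zs)" by (rule ceqR) (simp add: Cons.prems)
  also have "\<dots> = z * (x * prod_list zs)" by (simp add: mult.assoc)
  also have "E n \<dots> (z * (prod_list zs * x))" by (rule ceqL) (simp add: Cons)
  also have "\<dots> = prod_list (z # zs) * x" by (simp add: mult.assoc)
  finally show ?case .
qed

abbreviation Ti :: "nat \<Rightarrow> falg" where "Ti k \<equiv> tinv (bT k)"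

lemma tele1: "1 \<le> a \<Longrightarrow> b \<le> n \<Longrightarrow> E n (prod_list (map Ti [a..<b]) * prod_list (map bT (rev [a..<b]))) 1"
proof (induction b)
  case 0 then show ?case by simp
next
  case (Suc b)
  show ?case
  proof (cases "a \<le> b")
    case False then show ?thesis by simp
  next
    case True
    let ?P = "prod_list (map Ti [a..<b])" and ?Q = "prod_list (map bT (rev [a..<b]))"
    have "prod_list (map Ti [a..<Suc b]) * prod_list (map bT (rev [a..<Suc b])) = ?P * (Ti b * bT b) * ?Q"
      using True by (simp add: mult.assoc)
    also have "E n \<dots> (?P * 1 * ?Q)" by (rule ceqLR, rule TiT) (use Suc.prems True in auto)
    also have "E n \<dots> 1" using Suc by simp
    finally show ?thesis .
  qed
qed

lemma tele2: "1 \<le> a \<Longrightarrow> b \<le> n \<Longrightarrow> E n (prod_list (map bT [a..<b]) * prod_list (map Ti (rev [a..<b]))) 1"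
proof (induction b)
  case 0 then show ?case by simp
next
  case (Suc b)
  show ?case
  proof (cases "a \<le> b")
    case False then show ?thesis by simp
  next
    case True
    let ?P = "prod_list (map bT [a..<b])" and ?Q = "prod_list (map Ti (rev [a..<b]))"
    have "prod_list (map bT [a..<Suc b]) * prod_list (map Ti (rev [a..<Suc b])) = ?P * (bT b * Ti b) * ?Q"
      using True by (simp add: mult.assoc)
    also have "E n \<dots> (?P * 1 * ?Q)" by (rule ceqLR, rule TTi) (use Suc.prems True in auto)
    also have "E n \<dots> 1" using Suc by simp
    finally show ?thesis .
  qed
qed

lemma Xchain: "m + 1 \<le> n \<Longrightarrow>
  E n (prod_list (map bT (rev [1..<m+1])) * bX 1 * prod_list (map bT [1..<m+1])) (bX (m+1))"
proof (induction m)
  case 0 then show ?case by simp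
next
  case (Suc m)
  let ?P = "prod_list (map bT (rev [1..<m+1]))" and ?Q = "prod_list (map bT [1..<m+1])"
  have "prod_list (map bT (rev [1..<Suc m+1])) * bX 1 * prod_list (map bT [1..<Suc m+1])
     = bT (m+1) * (?P * bX 1 * ?Q) * bT (m+1)"
    by (simp add: mult.assoc)
  also have "E n \<dots> (bT (m+1) * bX (m+1) * bT (m+1))" by (rule ceqLR) (use Suc in simp)
  also have "E n \<dots> (bX (Suc m + 1))" using TXT[of "m+1" n] Suc.prems by simp
  finally show ?case .
qed

lemma conj_tinv: "E n (a * ai) 1 \<Longrightarrow> E n (tinv (a * b * ai)) (a * tinv b * ai)"
proof -
  assume h: "E n (a * ai) 1"
  have "tinv (a * b * ai) = a * b * ai - cc * 1" by (simp add: tinv_cc)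
  also have "E n \<dots> (a * b * ai - cc * (a * ai))" by (rule ceq_diff[OF ceq_refl], rule ceqL, rule ceq_sym[OF h])
  also have "\<dots> = a * tinv b * ai"
  proof -
    have "cc * (a * ai) = a * (cc * ai)" by (metis cc_c mult.assoc)
    then show ?thesis by (simp add: tinv_cc algebra_simps)
  qed
  finally show ?thesis .
qed

lemma braidinv0: "1 \<le> i \<Longrightarrow> i \<le> n - 2 \<Longrightarrow>
  E n (Ti i * bT (i+1) * bT i) (bT (i+1) * bT i * Ti (i+1))"
proof -
  assume a: "1 \<le> i" "i \<le> n - 2"
  have "Ti i * bT (i+1) * bT i = Ti i * bT (i+1) * bT i * 1" by simp
  also have "E n \<dots> (Ti i * bT (i+1) * bT i * (bT (i+1) * Ti (i+1)))"
    by (rule ceqL, rule ceq_sym, rule TTi) (use a in auto)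
  also have "\<dots> = Ti i * (bT (i+1) * bT i * bT (i+1)) * Ti (i+1)" by (simp add: mult.assoc)
  also have "E n \<dots> (Ti i * (bT i * bT (i+1) * bT i) * Ti (i+1))"
    by (rule ceqLR, rule ceq_sym, rule braid) (use a in auto)
  also have "\<dots> = (Ti i * bT i) * (bT (i+1) * bT i * Ti (i+1))" by (simp add: mult.assoc)
  also have "E n \<dots> (1 * (bT (i+1) * bT i * Ti (i+1)))"
    by (rule ceqR, rule TiT) (use a in auto)
  finally show ?thesis by simp
qed

lemma braidinv: "1 \<le> i \<Longrightarrow> i \<le> n - 2 \<Longrightarrow>
  E n (Ti i * (bT (i+1) * (bT i * z))) (bT (i+1) * (bT i * (Ti (i+1) * z)))"
  using ceqR[OF braidinv0, of i n z] by (simp add: mult.assoc)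

lemma braid2: "1 \<le> i \<Longrightarrow> i \<le> n - 2 \<Longrightarrow>
  E n (bT (i+1) * (bT i * (bT (i+1) * z))) (bT i * (bT (i+1) * (bT i * z)))"
  using ceqR[OF ceq_sym[OF braid], of i n z] by (simp add: mult.assoc)

lemma commTi_T: "1 \<le> i \<Longrightarrow> i \<le> n - 1 \<Longrightarrow> 1 \<le> j \<Longrightarrow> j \<le> n - 1 \<Longrightarrow> i + 2 \<le> j \<or> j + 2 \<le> i
   \<Longrightarrow> E n (Ti i * bT j) (bT j * Ti i)"
  by (rule comm_tinv1, rule commT) auto
lemma commTi_X: "1 \<le> i \<Longrightarrow> i \<le> n - 1 \<Longrightarrow> 1 \<le> j \<Longrightarrow> j \<le> n \<Longrightarrow> j \<noteq> i \<Longrightarrow> j \<noteq> i + 1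
   \<Longrightarrow> E n (Ti i * bX j) (bX j * Ti i)"
  by (rule comm_tinv1, rule commTX) auto

lemma upt_split3: "a \<le> m \<Longrightarrow> m < b \<Longrightarrow> [a..<b] = [a..<m] @ m # [Suc m..<b]"
  using upt_add_eq_append[of a m "b - m"] upt_conv_Cons[of m b] by simp


lemma cc_c2: "x * (cc * y) = cc * (x * y)" by (metis cc_c mult.assoc)

definition psi :: "nat \<Rightarrow> nat \<Rightarrow> falg" where
  "psi im k = (if k < im then bT k else if k = im then bT im * bT (im+1) * Ti im else bT (k+1))"

definition Wf :: "nat \<Rightarrow> nat \<Rightarrow> falg" where
  "Wf im j = prod_list (map Ti [j..<im]) * Ti im * prod_list (map Ti (rev [j..<im]))"

lemma lemC:
  assumes r: "r > 2" and im: "1 \<le> im" "im \<le> r - 1"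
  shows "E (r+1) (prod_list (map (\<lambda>k. tinv (psi im k)) [1..<r]) * (prod_list (map bT (rev [1..<r+1])) * bX 1) * bT (im+1))
     (bX 1 + cc * bX (im+1) * Wf im 1)"
proof -
  let ?n = "r+1"
  let ?A = "prod_list (map Ti [1..<im])"
  let ?A' = "prod_list (map Ti (rev [1..<im]))"
  let ?B = "prod_list (map Ti [im+2..<r+1])"
  let ?C = "prod_list (map bT (rev [im+2..<r+1]))"
  let ?D = "prod_list (map bT (rev [1..<im]))"
  let ?t = "tinv (psi im im)"
  have l1: "map (\<lambda>k. tinv (psi im k)) [1..<r] = map Ti [1..<im] @ ?t # map Ti [im+2..<r+1]"
  proof -
    have "[1..<r] = [1..<im] @ im # [Suc im..<r]" by (rule upt_split3) (use im r in auto)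
    moreover have "map (\<lambda>k. tinv (psi im k)) [1..<im] = map Ti [1..<im]" by (simp add: psi_def)
    moreover have "map (\<lambda>k. tinv (psi im k)) [Suc im..<r] = map Ti (map Suc [Suc im..<r])"
      by (simp add: psi_def)
    ultimately show ?thesis by (simp add: map_Suc_upt)
  qed
  have l2: "rev [1..<r+1] = rev [im+2..<r+1] @ [im+1, im] @ rev [1..<im]"
  proof -
    have "[1..<r+1] = [1..<im] @ im # [Suc im..<r+1]" by (rule upt_split3) (use im r in auto)
    moreover have "[Suc im..<r+1] = Suc im # [Suc (Suc im)..<r+1]" by (rule upt_conv_Cons) (use im r in auto)
    ultimately show ?thesis by simp
  qed
  have "prod_list (map (\<lambda>k. tinv (psi im k)) [1..<r]) * (prod_list (map bT (rev [1..<r+1])) * bX 1) * bT (im+1)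
      = ?A * (?t * ((?B * ?C) * (bT (im+1) * (bT im * (?D * (bX 1 * bT (im+1)))))))"
    unfolding l1 l2 by (simp del: upt_Suc add: mult.assoc)
  also have "E ?n \<dots> (?A * (?t * (1 * (bT (im+1) * (bT im * (?D * (bX 1 * bT (im+1))))))))"
    by (rule ceqL, rule ceqL, rule ceqR, rule tele1) (use im r in auto)
  also have "E ?n \<dots> (?A * ((bT im * Ti (im+1) * Ti im) * (bT (im+1) * (bT im * (?D * (bX 1 * bT (im+1)))))))"
    unfolding mult_1_left
    by (rule ceqL, rule ceqR, unfold psi_def, simp, rule conj_tinv, rule TTi) (use im r in auto)
  also have "\<dots> = ?A * (bT im * (Ti (im+1) * (Ti im * (bT (im+1) * (bT im * (?D * (bX 1 * bT (im+1))))))))"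
    by (simp add: mult.assoc)
  also have "E ?n \<dots> (?A * (bT im * (Ti (im+1) * (bT (im+1) * (bT im * (Ti (im+1) * (?D * (bX 1 * bT (im+1)))))))))"
    by (rule ceqL, rule ceqL, rule ceqL, rule braidinv) (use im r in auto)
  also have "\<dots> = ?A * (bT im * ((Ti (im+1) * bT (im+1)) * (bT im * (Ti (im+1) * (?D * (bX 1 * bT (im+1)))))))"
    by (simp add: mult.assoc)
  also have "E ?n \<dots> (?A * (bT im * (1 * (bT im * (Ti (im+1) * (?D * (bX 1 * bT (im+1))))))))"
    by (rule ceqL, rule ceqL, rule ceqR, rule TiT) (use im r in auto)
  also have "\<dots> = ?A * (bT im * (bT im * ((Ti (im+1) * (?D * bX 1)) * bT (im+1))))"
    by (simp add: mult.assoc)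
  also have "E ?n \<dots> (?A * (bT im * (bT im * (((?D * bX 1) * Ti (im+1)) * bT (im+1)))))"
  proof (rule ceqL, rule ceqL, rule ceqL, rule ceqR)
    have h1: "E ?n (Ti (im+1) * ?D) (?D * Ti (im+1))"
      by (rule comm_prod) (use im r in \<open>auto intro!: commTi_T\<close>)
    have h2: "E ?n (Ti (im+1) * bX 1) (bX 1 * Ti (im+1))"
      by (rule commTi_X) (use im r in auto)
    have "Ti (im+1) * (?D * bX 1) = (Ti (im+1) * ?D) * bX 1" by (simp add: mult.assoc)
    also have "E ?n \<dots> ((?D * Ti (im+1)) * bX 1)" by (rule ceqR[OF h1])
    also have "\<dots> = ?D * (Ti (im+1) * bX 1)" by (simp add: mult.assoc)
    also have "E ?n \<dots> (?D * (bX 1 * Ti (im+1)))" by (rule ceqL[OF h2])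
    finally show "E ?n (Ti (im+1) * (?D * bX 1)) (?D * bX 1 * Ti (im+1))" by (simp add: mult.assoc)
  qed
  also have "\<dots> = ?A * (bT im * (bT im * ((?D * bX 1) * (Ti (im+1) * bT (im+1)))))"
    by (simp add: mult.assoc)
  also have "E ?n \<dots> (?A * (bT im * (bT im * ((?D * bX 1) * 1))))"
    by (rule ceqL, rule ceqL, rule ceqL, rule ceqL, rule TiT) (use im r in auto)
  also have "\<dots> = ?A * (bT im * bT im) * (?D * bX 1)"
    by (simp add: mult.assoc)
  also have "E ?n \<dots> (?A * (1 + cc * bT im) * (?D * bX 1))"
    by (rule ceqLR, rule TT) (use im r in auto)
  also have "\<dots> = (?A * ?D) * bX 1 + cc * (?A * (bT im * ?D * bX 1))"
    by (simp add: algebra_simps cc_c2)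
  also have "E ?n \<dots> (1 * bX 1 + cc * (?A * (bT im * ?D * bX 1)))"
    by (rule ceq_add[OF ceqR ceq_refl], rule tele1) (use im r in auto)
  also have "E ?n \<dots> (bX 1 + cc * (?A * (bX (im+1) * (Ti im * ?A'))))"
  proof (simp only: mult_1_left, rule ceq_add[OF ceq_refl], rule ceqL, rule ceqL)
    let ?Q = "prod_list (map bT [1..<im+1])" and ?Qi = "prod_list (map Ti (rev [1..<im+1]))"
    have pe: "bT im * ?D = prod_list (map bT (rev [1..<im+1]))" using im by simp
    have "bT im * ?D * bX 1 = bT im * ?D * bX 1 * 1" by simp
    also have "E ?n \<dots> (bT im * ?D * bX 1 * (?Q * ?Qi))"
      by (rule ceqL, rule ceq_sym, rule tele2) (use im r in auto)
    also have "\<dots> = (prod_list (map bT (rev [1..<im+1])) * bX 1 * ?Q) * ?Qi"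
      by (simp only: pe mult.assoc)
    also have "E ?n \<dots> (bX (im+1) * ?Qi)"
      by (rule ceqR, rule Xchain) (use im r in auto)
    also have "\<dots> = bX (im+1) * (Ti im * ?A')" using im by simp
    finally show "E ?n (bT im * ?D * bX 1) (bX (im+1) * (Ti im * ?A'))" .
  qed
  also have "\<dots> = bX 1 + cc * ((?A * bX (im+1)) * (Ti im * ?A'))" by (simp add: mult.assoc)
  also have "E ?n \<dots> (bX 1 + cc * ((bX (im+1) * ?A) * (Ti im * ?A')))"
  proof (rule ceq_add[OF ceq_refl], rule ceqL, rule ceqR, rule ceq_sym, rule comm_prod)
    fix z assume "z \<in> set (map Ti [1..<im])"
    then obtain k where k: "z = Ti k" "1 \<le> k" "k < im" by auto
    show "E ?n (bX (im+1) * z) (z * bX (im+1))" unfolding k(1)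
      by (rule ceq_sym, rule commTi_X) (use k im r in auto)
  qed
  also have "\<dots> = bX 1 + cc * bX (im+1) * Wf im 1"
    by (simp add: Wf_def mult.assoc)
  finally show ?thesis .
qed

lemma Wf_step: "j < im \<Longrightarrow> Wf im j = Ti j * Wf im (j+1) * Ti j"
  by (simp add: Wf_def upt_conv_Cons mult.assoc)

lemma lemD:
  assumes r: "r > 2" and im: "im \<le> r - 1" and j: "1 \<le> j" "j < im"
  shows "E (r+1) (bT j * (bX j + cc * bX (im+1) * Wf im j) * bT j) (bX (j+1) + cc * bX (im+1) * Wf im (j+1))"
proof -
  let ?n = "r+1"
  have "bT j * (bX j + cc * bX (im+1) * Wf im j) * bT j
     = bT j * bX j * bT j + cc * ((bT j * bX (im+1)) * (Wf im j * bT j))"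
    by (simp add: algebra_simps cc_c2)
  also have "E ?n \<dots> (bX (j+1) + cc * ((bX (im+1) * bT j) * (Wf im j * bT j)))"
    by (rule ceq_add, rule TXT, use j im r in simp, use j im r in simp,
        rule ceqL, rule ceqR, rule commTX) (use j im r in auto)
  also have "\<dots> = bX (j+1) + cc * (bX (im+1) * ((bT j * Ti j) * Wf im (j+1) * (Ti j * bT j)))"
    using j by (simp add: Wf_step mult.assoc)
  also have "E ?n \<dots> (bX (j+1) + cc * (bX (im+1) * (1 * Wf im (j+1) * 1)))"
    by (rule ceq_add[OF ceq_refl], rule ceqL, rule ceqL, rule ceq_mult, rule ceqR, rule TTi, 
        use j im r in simp, use j im r in simp, simp, rule TiT) (use j im r in auto)
  also have "\<dots> = bX (j+1) + cc * bX (im+1) * Wf im (j+1)" by (simp add: mult.assoc)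
  finally show ?thesis .
qed

lemma Xdown: "1 \<le> j \<Longrightarrow> j \<le> n - 1 \<Longrightarrow> E n (Ti j * bX (j+1) * Ti j) (bX j)"
proof -
  assume a: "1 \<le> j" "j \<le> n - 1"
  have "E n (Ti j * bX (j+1) * Ti j) (Ti j * (bT j * bX j * bT j) * Ti j)"
    by (rule ceqLR, rule ceq_sym, rule TXT) (use a in auto)
  also have "\<dots> = (Ti j * bT j) * bX j * (bT j * Ti j)" by (simp add: mult.assoc)
  also have "E n \<dots> (1 * bX j * 1)"
    by (rule ceq_mult, rule ceqR, rule TiT, use a in simp, use a in simp, rule TTi) (use a in auto)
  finally show ?thesis by simp
qed

lemma lemE:
  assumes r: "r > 2" and im: "1 \<le> im" "im \<le> r - 1"
  shows "E (r+1) (prod_list (map bT (rev [1..<r+1])) * bX 1 * bT (im+1) * prod_list (map (psi im) [1..<r]))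
     (bX (r+1))"
proof -
  let ?n = "r+1"
  let ?A = "prod_list (map bT [1..<im])"
  let ?B = "prod_list (map bT [im+2..<r+1])"
  let ?P = "prod_list (map bT (rev [1..<r+1]))"
  have l1: "map (psi im) [1..<r] = map bT [1..<im] @ psi im im # map bT [im+2..<r+1]"
  proof -
    have "[1..<r] = [1..<im] @ im # [Suc im..<r]" by (rule upt_split3) (use im r in auto)
    moreover have "map (psi im) [1..<im] = map bT [1..<im]" by (simp add: psi_def)
    moreover have "map (psi im) [Suc im..<r] = map bT (map Suc [Suc im..<r])"
      by (simp add: psi_def)
    ultimately show ?thesis by (simp add: map_Suc_upt)
  qed
  have l2: "[1..<r+1] = [1..<im] @ im # (im+1) # [im+2..<r+1]"
  proof -
    have "[1..<r+1] = [1..<im] @ im # [Suc im..<r+1]" by (rule upt_split3) (use im r in auto)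
    moreover have "[Suc im..<r+1] = Suc im # [Suc (Suc im)..<r+1]" by (rule upt_conv_Cons) (use im r in auto)
    ultimately show ?thesis by simp
  qed
  have "?P * bX 1 * bT (im+1) * prod_list (map (psi im) [1..<r])
      = ?P * bX 1 * ((bT (im+1) * ?A) * (bT im * (bT (im+1) * (Ti im * ?B))))"
    unfolding l1 by (simp del: upt_Suc add: mult.assoc psi_def)
  also have "E ?n \<dots> (?P * bX 1 * ((?A * bT (im+1)) * (bT im * (bT (im+1) * (Ti im * ?B)))))"
  proof (rule ceqL, rule ceqR, rule comm_prod)
    fix z assume "z \<in> set (map bT [1..<im])"
    then obtain k where k: "z = bT k" "1 \<le> k" "k < im" by auto
    show "E ?n (bT (im+1) * z) (z * bT (im+1))" unfolding k(1)
      by (rule commT) (use k im r in auto)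
  qed
  also have "\<dots> = ?P * bX 1 * (?A * (bT (im+1) * (bT im * (bT (im+1) * (Ti im * ?B)))))"
    by (simp add: mult.assoc)
  also have "E ?n \<dots> (?P * bX 1 * (?A * (bT im * (bT (im+1) * (bT im * (Ti im * ?B))))))"
    by (rule ceqL, rule ceqL, rule braid2) (use im r in auto)
  also have "\<dots> = ?P * bX 1 * (?A * (bT im * (bT (im+1) * ((bT im * Ti im) * ?B))))"
    by (simp add: mult.assoc)
  also have "E ?n \<dots> (?P * bX 1 * (?A * (bT im * (bT (im+1) * (1 * ?B)))))"
    by (rule ceqL, rule ceqL, rule ceqL, rule ceqL, rule ceqR, rule TTi) (use im r in auto)
  also have "\<dots> = ?P * bX 1 * prod_list (map bT [1..<r+1])"
    unfolding l2 by (simp del: upt_Suc add: mult.assoc)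
  also have "E ?n \<dots> (bX (r+1))"
    using Xchain[of r ?n] by simp
  finally show ?thesis .
qed

lemma genBL:
  assumes iso_r: "induces_iso (eq_e r) (eq_BL r) (phi r)"
    and iso_r1: "induces_iso (eq_e (r+1)) (eq_BL (r+1)) (phi (r+1))"
    and emb: "induces_embedding (eq_e r) (eq_e (r+1)) (phiE r im)"
    and h1: "E r (phi r y) a" and h2: "E (r+1) (phi (r+1) (phiE r im y)) b"
  shows "phiBL_is r im a b"
  unfolding phiBL_is_def
proof (intro allI impI)
  fix y' assume "eq_BL r (phi r y') a"
  then have "E r (phi r y') (phi r y)" using h1 by (simp add: eq_BL_E) (metis ceq_sym ceq_trans)
  then have "eq_e r y' y" using iso_r by (simp add: induces_iso_def induces_embedding_def eq_BL_E)
  then have "eq_e (r+1) (phiE r im y') (phiE r im y)" using emb by (simp add: induces_embedding_def)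
  then have "E (r+1) (phi (r+1) (phiE r im y')) (phi (r+1) (phiE r im y))"
    using iso_r1 by (simp add: induces_iso_def induces_embedding_def eq_BL_E)
  then show "eq_BL (r+1) (phi (r+1) (phiE r im y')) b" using h2 by (simp add: eq_BL_E) (metis ceq_trans)
qed

lemma phi_mult: "phi n (x * y) = phi n x * phi n y" by (simp add: phi_def fsubst_mult)
lemma phi_tinv: "phi n (tinv x) = tinv (phi n x)" by (simp add: phi_def fsubst_tinv)
lemma phi_prod: "phi n (prod_list xs) = prod_list (map (phi n) xs)" by (simp add: phi_def fsubst_prod_list)
lemma phiE_mult: "phiE r im (x * y) = phiE r im x * phiE r im y" by (simp add: phiE_def fsubst_mult)
lemma phiE_tinv: "phiE r im (tinv x) = tinv (phiE r im x)" by (simp add: phiE_def fsubst_tinv)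
lemma phiE_prod: "phiE r im (prod_list xs) = prod_list (map (phiE r im) xs)" by (simp add: phiE_def fsubst_prod_list)

lemma phi_T: "1 \<le> k \<Longrightarrow> k \<le> n - 1 \<Longrightarrow> phi n (g (GT k)) = bT k"
  by (simp add: phi_def phi_gen_def)
lemma phi_RhoInv: "phi n (g GRhoInv) = phiRhoInv n"
  by (simp add: phi_def phi_gen_def)

lemma PP_T: assumes "1 \<le> k" "k < r" "im \<le> r - 1"
  shows "phi (r+1) (phiE r im (g (GT k))) = psi im k"
proof -
  have e: "m \<le> r \<Longrightarrow> eT (Suc r) m = g (GT m)" for m by (simp add: eT_def)
  have p: "1 \<le> m \<Longrightarrow> m \<le> r \<Longrightarrow> phi (Suc r) (g (GT m)) = bT m" for m by (simp add: phi_T)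
  show ?thesis using assms
    by (simp add: phiE_def phiE_gen_def e p phi_mult phi_tinv psi_def Let_def)
qed
lemma PP_RhoInv: "r > 2 \<Longrightarrow> im \<le> r - 1 \<Longrightarrow> phi (r+1) (phiE r im (g GRhoInv)) = phiRhoInv (r+1) * bT (im+1)"
proof -
  assume a: "r > 2" "im \<le> r - 1"
  then have "Suc im mod Suc r = Suc im" by simp
  then show ?thesis using a by (simp add: phiE_def phiE_gen_def eT_def phi_mult phi_T phi_RhoInv)
qed

definition y1 :: "nat \<Rightarrow> falg" where
  "y1 r = prod_list (map (\<lambda>k. tinv (g (GT k))) [1..<r]) * g GRhoInv"
primrec yL :: "nat \<Rightarrow> nat \<Rightarrow> falg" where
  "yL r 0 = y1 r"
| "yL r (Suc d) = g (GT (Suc d)) * yL r d * g (GT (Suc d))"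
definition yR :: "nat \<Rightarrow> falg" where
  "yR r = g GRhoInv * prod_list (map (\<lambda>k. g (GT k)) [1..<r])"
primrec yD :: "nat \<Rightarrow> nat \<Rightarrow> falg" where
  "yD r 0 = yR r"
| "yD r (Suc d) = tinv (g (GT (r-1-d))) * yD r d * tinv (g (GT (r-1-d)))"

lemma phi_y1: "E r (phi r (y1 r)) (bX 1)"
proof -
  have "map (phi r \<circ> (\<lambda>k. tinv (g (GT k)))) [1..<r] = map Ti [1..<r]"
    by (auto simp: phi_tinv phi_T)
  note m = this
  have "phi r (y1 r) = prod_list (map Ti [1..<r]) * prod_list (map bT (rev [1..<r])) * bX 1"
    unfolding y1_def phi_mult phi_prod map_map m phi_RhoInv phiRhoInv_def by (simp add: mult.assoc)
  also have "E r \<dots> (1 * bX 1)" by (rule ceqR, rule tele1) auto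
  finally show ?thesis by simp
qed

lemma PP_y1: assumes "r > 2" "1 \<le> im" "im \<le> r - 1"
  shows "E (r+1) (phi (r+1) (phiE r im (y1 r))) (bX 1 + cc * bX (im+1) * Wf im 1)"
proof -
  have "map (phi (r+1) \<circ> (phiE r im \<circ> (\<lambda>k. tinv (g (GT k))))) [1..<r] = map (\<lambda>k. tinv (psi im k)) [1..<r]"
    using assms by (auto simp: phi_tinv phiE_tinv PP_T[simplified])
  note m = this
  have "phi (r+1) (phiE r im (y1 r)) = prod_list (map (\<lambda>k. tinv (psi im k)) [1..<r]) * (prod_list (map bT (rev [1..<r+1])) * bX 1) * bT (im+1)"
    unfolding y1_def phi_mult phiE_mult phiE_prod phi_prod map_map m PP_RhoInv[OF assms(1,3)] phiRhoInv_def
    by (simp del: upt_Suc add: mult.assoc)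
  also have "E (r+1) \<dots> (bX 1 + cc * bX (im+1) * Wf im 1)" by (rule lemC) (use assms in auto)
  finally show ?thesis .
qed

lemma yL_claim:
  assumes r: "r > 2" and im: "1 \<le> im" "im \<le> r - 1"
  shows "d + 1 \<le> im \<Longrightarrow> E r (phi r (yL r d)) (bX (d+1)) \<and>
     E (r+1) (phi (r+1) (phiE r im (yL r d))) (bX (d+1) + cc * bX (im+1) * Wf im (d+1))"
proof (induction d)
  case 0 then show ?case using phi_y1 PP_y1[OF r im] by simp
next
  case (Suc d)
  then have IH1: "E r (phi r (yL r d)) (bX (d+1))"
    and IH2: "E (r+1) (phi (r+1) (phiE r im (yL r d))) (bX (d+1) + cc * bX (im+1) * Wf im (d+1))" by auto
  have t1: "phi r (g (GT (Suc d))) = bT (d+1)" using Suc.prems im by (simp add: phi_T)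
  have t2: "phi (r+1) (phiE r im (g (GT (Suc d)))) = bT (d+1)"
    using Suc.prems im r by (simp add: PP_T[simplified] psi_def)
  have A: "E r (phi r (yL r (Suc d))) (bX (Suc d + 1))"
  proof -
    have "phi r (yL r (Suc d)) = bT (d+1) * phi r (yL r d) * bT (d+1)" by (simp add: phi_mult t1)
    also have "E r \<dots> (bT (d+1) * bX (d+1) * bT (d+1))" by (rule ceqLR[OF IH1])
    also have "E r \<dots> (bX (d+1+1))" by (rule TXT) (use Suc.prems im in auto)
    finally show ?thesis by simp
  qed
  have B: "E (r+1) (phi (r+1) (phiE r im (yL r (Suc d)))) (bX (Suc d + 1) + cc * bX (im+1) * Wf im (Suc d + 1))"
  proof -
    have "phi (r+1) (phiE r im (yL r (Suc d))) = bT (d+1) * phi (r+1) (phiE r im (yL r d)) * bT (d+1)"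
      by (simp only: yL.simps phi_mult phiE_mult t2)
    also have "E (r+1) \<dots> (bT (d+1) * (bX (d+1) + cc * bX (im+1) * Wf im (d+1)) * bT (d+1))" by (rule ceqLR[OF IH2])
    also have "E (r+1) \<dots> (bX (d+1+1) + cc * bX (im+1) * Wf im (d+1+1))" by (rule lemD) (use Suc.prems im r in auto)
    finally show ?thesis by simp
  qed
  show ?case using A B by simp
qed

lemma yD_claim:
  assumes r: "r > 2" and im: "1 \<le> im" "im \<le> r - 1"
  shows "im + 1 + d \<le> r \<Longrightarrow> E r (phi r (yD r d)) (bX (r-d)) \<and>
     E (r+1) (phi (r+1) (phiE r im (yD r d))) (bX (r-d+1))"
proof (induction d)
  case 0
  have A: "E r (phi r (yR r)) (bX r)"
  proof -
    have m: "map (phi r \<circ> (\<lambda>k. g (GT k))) [1..<r] = map bT [1..<r]" by (auto simp: phi_T)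
    have "phi r (yR r) = prod_list (map bT (rev [1..<(r-1)+1])) * bX 1 * prod_list (map bT [1..<(r-1)+1])"
      unfolding yR_def phi_mult phi_prod map_map m phi_RhoInv phiRhoInv_def using r by simp
    also have "E r \<dots> (bX ((r-1)+1))" by (rule Xchain) (use r in auto)
    finally show ?thesis using r by simp
  qed
  have B: "E (r+1) (phi (r+1) (phiE r im (yR r))) (bX (r+1))"
  proof -
    have m: "map (phi (r+1) \<circ> (phiE r im \<circ> (\<lambda>k. g (GT k)))) [1..<r] = map (psi im) [1..<r]"
      using im by (auto simp: PP_T[simplified])
    have "phi (r+1) (phiE r im (yR r)) = prod_list (map bT (rev [1..<r+1])) * bX 1 * bT (im+1) * prod_list (map (psi im) [1..<r])"
      unfolding yR_def phi_mult phiE_mult phiE_prod phi_prod map_map m PP_RhoInv[OF r im(2)] phiRhoInv_def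
      by (simp del: upt_Suc add: mult.assoc)
    also have "E (r+1) \<dots> (bX (r+1))" by (rule lemE) (use r im in auto)
    finally show ?thesis .
  qed
  show ?case using A B by simp
next
  case (Suc d)
  then have IH1: "E r (phi r (yD r d)) (bX (r-d))"
    and IH2: "E (r+1) (phi (r+1) (phiE r im (yD r d))) (bX (r-d+1))" by auto
  let ?j = "r - 1 - d"
  have j: "im + 1 \<le> ?j" "?j + 1 = r - d" "?j < r" using Suc.prems by auto
  have t1: "phi r (tinv (g (GT ?j))) = Ti ?j" using j im by (simp add: phi_T phi_tinv)
  have t2: "phi (r+1) (phiE r im (tinv (g (GT ?j)))) = Ti (?j+1)"
    using j im r by (simp add: PP_T[simplified] psi_def phi_tinv phiE_tinv)
  have A: "E r (phi r (yD r (Suc d))) (bX (r - Suc d))"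
  proof -
    have "phi r (yD r (Suc d)) = Ti ?j * phi r (yD r d) * Ti ?j" by (simp only: yD.simps phi_mult t1)
    also have "E r \<dots> (Ti ?j * bX (?j+1) * Ti ?j)" unfolding j(2) by (rule ceqLR[OF IH1])
    also have "E r \<dots> (bX ?j)" by (rule Xdown) (use j im in auto)
    finally show ?thesis by (simp only: diff_Suc_eq_diff_pred diff_commute)
  qed
  have B: "E (r+1) (phi (r+1) (phiE r im (yD r (Suc d)))) (bX (r - Suc d + 1))"
  proof -
    have "phi (r+1) (phiE r im (yD r (Suc d))) = Ti (?j+1) * phi (r+1) (phiE r im (yD r d)) * Ti (?j+1)"
      by (simp only: yD.simps phi_mult phiE_mult t2)
    also have "E (r+1) \<dots> (Ti (?j+1) * bX (?j+1+1) * Ti (?j+1))" unfolding j(2) by (rule ceqLR[OF IH2])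
    also have "E (r+1) \<dots> (bX (?j+1))" by (rule Xdown) (use j im in auto)
    finally have F: "E (r+1) (phi (r+1) (phiE r im (yD r (Suc d)))) (bX (?j+1))" .
    have "?j + 1 = r - Suc d + 1" using j by simp
    then show ?thesis using F by (simp only:)
  qed
  show ?case using A B by blast
qed

theorem mainTheorem9:
  fixes r im :: nat
  assumes hr: "r > 2"
    and him: "1 \<le> im" "im \<le> r - 1"
    and iso_r: "induces_iso (eq_e r) (eq_BL r) (phi r)"
    and iso_r1: "induces_iso (eq_e (r+1)) (eq_BL (r+1)) (phi (r+1))"
    and emb: "induces_embedding (eq_e r) (eq_e (r+1)) (phiE r im)"
  shows "(\<forall>i. 1 \<le> i \<and> i < im \<longrightarrow> phiBL_is r im (bT i) (bT i))
       \<and> phiBL_is r im (bT im) (bT im * bT (im+1) * tinv (bT im))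
       \<and> (\<forall>i. im + 1 \<le> i \<and> i \<le> r - 1 \<longrightarrow> phiBL_is r im (bT i) (bT (i+1)))
       \<and> (\<forall>j. 1 \<le> j \<and> j \<le> im \<longrightarrow> phiBL_is r im (bX j)
            (bX j + (vv - vvi) * bX (im+1)
               * prod_list (map (\<lambda>k. tinv (bT k)) [j..<im])
               * tinv (bT im)
               * prod_list (map (\<lambda>k. tinv (bT k)) (rev [j..<im]))))
       \<and> (\<forall>j. im + 1 \<le> j \<and> j \<le> r \<longrightarrow> phiBL_is r im (bX j) (bX (j+1)))"
proof -
  note G = genBL[OF iso_r iso_r1 emb]
  have Tcase: "1 \<le> i \<Longrightarrow> i \<le> r - 1 \<Longrightarrow> phiBL_is r im (bT i) (psi im i)" for i
    by (rule G[of "g (GT i)"]) (use hr him in \<open>simp_all add: phi_T PP_T[simplified]\<close>)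
  have P1: "\<forall>i. 1 \<le> i \<and> i < im \<longrightarrow> phiBL_is r im (bT i) (bT i)"
  proof (intro allI impI)
    fix i assume i: "1 \<le> i \<and> i < im"
    have "phiBL_is r im (bT i) (psi im i)" by (rule Tcase) (use i him in auto)
    then show "phiBL_is r im (bT i) (bT i)" using i by (simp add: psi_def)
  qed
  have P2: "phiBL_is r im (bT im) (bT im * bT (im+1) * tinv (bT im))"
  proof -
    have "phiBL_is r im (bT im) (psi im im)" by (rule Tcase) (use hr him in auto)
    then show ?thesis by (simp add: psi_def)
  qed
  have P3: "\<forall>i. im + 1 \<le> i \<and> i \<le> r - 1 \<longrightarrow> phiBL_is r im (bT i) (bT (i+1))"
  proof (intro allI impI)
    fix i assume i: "im + 1 \<le> i \<and> i \<le> r - 1"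
    have "phiBL_is r im (bT i) (psi im i)" by (rule Tcase) (use i him in auto)
    then show "phiBL_is r im (bT i) (bT (i+1))" using i by (simp add: psi_def)
  qed
  have P4: "\<forall>j. 1 \<le> j \<and> j \<le> im \<longrightarrow> phiBL_is r im (bX j)
            (bX j + (vv - vvi) * bX (im+1)
               * prod_list (map (\<lambda>k. tinv (bT k)) [j..<im])
               * tinv (bT im)
               * prod_list (map (\<lambda>k. tinv (bT k)) (rev [j..<im])))"
  proof (intro allI impI)
    fix j assume j: "1 \<le> j \<and> j \<le> im"
    have c: "E r (phi r (yL r (j-1))) (bX (j-1+1)) \<and>
     E (r+1) (phi (r+1) (phiE r im (yL r (j-1)))) (bX (j-1+1) + cc * bX (im+1) * Wf im (j-1+1))"
      by (rule yL_claim[OF hr him]) (use j in auto)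
    have e: "j - 1 + 1 = j" using j by simp
    have w: "cc * bX (im+1) * Wf im j = (vv - vvi) * bX (im+1)
               * prod_list (map (\<lambda>k. tinv (bT k)) [j..<im])
               * tinv (bT im)
               * prod_list (map (\<lambda>k. tinv (bT k)) (rev [j..<im]))"
      by (simp add: Wf_def cc_def mult.assoc)
    show "phiBL_is r im (bX j)
            (bX j + (vv - vvi) * bX (im+1)
               * prod_list (map (\<lambda>k. tinv (bT k)) [j..<im])
               * tinv (bT im)
               * prod_list (map (\<lambda>k. tinv (bT k)) (rev [j..<im])))"
      unfolding w[symmetric] by (rule G[of "yL r (j-1)"]) (use c e in \<open>simp_all only:\<close>)
  qed
  have P5: "\<forall>j. im + 1 \<le> j \<and> j \<le> r \<longrightarrow> phiBL_is r im (bX j) (bX (j+1))"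
  proof (intro allI impI)
    fix j assume j: "im + 1 \<le> j \<and> j \<le> r"
    have c: "E r (phi r (yD r (r-j))) (bX (r-(r-j))) \<and>
     E (r+1) (phi (r+1) (phiE r im (yD r (r-j)))) (bX (r-(r-j)+1))"
      by (rule yD_claim[OF hr him]) (use j in auto)
    have e: "r - (r - j) = j" using j by simp
    show "phiBL_is r im (bX j) (bX (j+1))"
      by (rule G[of "yD r (r-j)"]) (use c e in \<open>simp_all only:\<close>)
  qed
  show ?thesis using P1 P2 P3 P4 P5 by blast
qed
end
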